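(* In the setting of the context: if $Y(0)$ is $g$-orthogonal to $P$, there is $\varepsilon>0$ such that the index of $\hat I_\sigma$ restricted to $\mathcal H_P(\sigma)\times\mathcal H_P(\sigma)$ is zero for all $\sigma\in\left]0,\varepsilon\right]$. If $Y(0)$ is not $g$-orthogonal to $P$, then the index of $C_0(V,W)=\int_0^1g(V'(t),W'(t))\,dt$ restricted to $\mathcal H_P(0)\times\mathcal H_P(0)$ is zero.
   Context: $g$ is a nondegenerate symmetric bilinear form on $\mathbb R^n$ of index $1$, $R:[0,1]\to\mathcal L(\mathbb R^n)$ continuous with $g$-symmetric values, $Y:[0,1]\to\mathbb R^n$ a $C^2$ map with $g(Y,Y)<0$ and $Y''=R(t)[Y]$, $P$ a $g$-nondegenerate subspace, $S:P\to P$ $g$-symmetric. $H^1_P([0,1];\mathbb R^n)=\{V\in H^1:V(0)\in P,V(1)=0\}$; for $\sigma\in[0,1]$, $\mathcal H_P(\sigma)=\{V\in H^1_P: g(V'(t),Y(\sigma t))-\sigma g(V(t),Y'(\sigma t))=0\text{ a.e.}\}$; $\hat I_\sigma(V,W)=\int_0^1\big[\tfrac1\sigma g(V',W')+\sigma g(R(\sigma t)[V],W)\big]dt-g(S[V(0)],W(0))$ for $\sigma>0$. The index of a symmetric bilinear form is the maximal dimension of a subspace on which it is negative definite. *)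

theory Defs
  imports "HOL-Analysis.Analysis"
begin

text \<open>A k-dimensional subspace L is
described through a basis v 0, ..., v (k-1) of L (linearly independent elements of U),
L being the set of their linear combinations.\<close>

definition negdef_dims :: "('a::real_vector \<Rightarrow> 'a \<Rightarrow> real) \<Rightarrow> 'a set \<Rightarrow> nat set" where
  "negdef_dims B U = {k. \<exists>v::nat \<Rightarrow> 'a. (\<forall>i<k. v i \<in> U)
      \<and> (\<forall>c. (\<Sum>i<k. c i *\<^sub>R v i) = 0 \<longrightarrow> (\<forall>i<k. c i = 0))
      \<and> (\<forall>c. (\<Sum>i<k. c i *\<^sub>R v i) \<noteq> 0 \<longrightarrow>
              B (\<Sum>i<k. c i *\<^sub>R v i) (\<Sum>i<k. c i *\<^sub>R v i) < 0)}"

definition form_index :: "('a::real_vector \<Rightarrow> 'a \<Rightarrow> real) \<Rightarrow> 'a set \<Rightarrow> enat" where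
  "form_index B U = Sup (enat ` negdef_dims B U)"

definition fun_negdef_dims ::
  "(('b \<Rightarrow> 'a::real_vector) \<Rightarrow> ('b \<Rightarrow> 'a) \<Rightarrow> real) \<Rightarrow> ('b \<Rightarrow> 'a) set \<Rightarrow> nat set" where
  "fun_negdef_dims B U = {k. \<exists>v::nat \<Rightarrow> 'b \<Rightarrow> 'a. (\<forall>i<k. v i \<in> U)
      \<and> (\<forall>c. (\<lambda>t. \<Sum>i<k. c i *\<^sub>R v i t) = (\<lambda>t. 0) \<longrightarrow> (\<forall>i<k. c i = 0))
      \<and> (\<forall>c. (\<lambda>t. \<Sum>i<k. c i *\<^sub>R v i t) \<noteq> (\<lambda>t. 0) \<longrightarrow>
              B (\<lambda>t. \<Sum>i<k. c i *\<^sub>R v i t) (\<lambda>t. \<Sum>i<k. c i *\<^sub>R v i t) < 0)}"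

definition fun_form_index ::
  "(('b \<Rightarrow> 'a::real_vector) \<Rightarrow> ('b \<Rightarrow> 'a) \<Rightarrow> real) \<Rightarrow> ('b \<Rightarrow> 'a) set \<Rightarrow> enat" where
  "fun_form_index B U = Sup (enat ` fun_negdef_dims B U)"

definition is_H1_deriv :: "(real \<Rightarrow> real^'n) \<Rightarrow> (real \<Rightarrow> real^'n) \<Rightarrow> bool" where
  "is_H1_deriv V V' \<longleftrightarrow> V' \<in> borel_measurable (lebesgue_on {0..1})
      \<and> (\<lambda>t. (norm (V' t))\<^sup>2) integrable_on {0..1}
      \<and> (\<forall>t\<in>{0..1}. V t = V 0 + integral {0..t} V')"

definition H1 :: "(real \<Rightarrow> real^'n) set" where
  "H1 = {V. \<exists>V'. is_H1_deriv V V'}"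

text \<open>A chosen weak derivative (unique almost everywhere).\<close>
definition H1_deriv :: "(real \<Rightarrow> real^'n) \<Rightarrow> real \<Rightarrow> real^'n" where
  "H1_deriv V = (SOME V'. is_H1_deriv V V')"

definition H1_P :: "(real^'n) set \<Rightarrow> (real \<Rightarrow> real^'n) set" where
  "H1_P P = {V \<in> H1. V 0 \<in> P \<and> V 1 = 0}"

definition HP_sigma :: "(real^'n \<Rightarrow> real^'n \<Rightarrow> real) \<Rightarrow> (real \<Rightarrow> real^'n) \<Rightarrow> (real \<Rightarrow> real^'n)
     \<Rightarrow> (real^'n) set \<Rightarrow> real \<Rightarrow> (real \<Rightarrow> real^'n) set" where
  "HP_sigma g Y Y' P \<sigma> = {V \<in> H1_P P.
     AE t in lebesgue_on {0..1}. g (H1_deriv V t) (Y (\<sigma> * t)) - \<sigma> * g (V t) (Y' (\<sigma> * t)) = 0}"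

definition I_hat :: "(real^'n \<Rightarrow> real^'n \<Rightarrow> real) \<Rightarrow> (real \<Rightarrow> real^'n^'n) \<Rightarrow> (real^'n \<Rightarrow> real^'n)
     \<Rightarrow> real \<Rightarrow> (real \<Rightarrow> real^'n) \<Rightarrow> (real \<Rightarrow> real^'n) \<Rightarrow> real" where
  "I_hat g R S \<sigma> V W =
     integral {0..1} (\<lambda>t. (1 / \<sigma>) * g (H1_deriv V t) (H1_deriv W t)
                         + \<sigma> * g (R (\<sigma> * t) *v V t) (W t))
     - g (S (V 0)) (W 0)"

definition C0 :: "(real^'n \<Rightarrow> real^'n \<Rightarrow> real) \<Rightarrow> (real \<Rightarrow> real^'n) \<Rightarrow> (real \<Rightarrow> real^'n) \<Rightarrow> real" where
  "C0 g V W = integral {0..1} (\<lambda>t. g (H1_deriv V t) (H1_deriv W t))"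

end

theory Submission imports Defs begin


lemma AE_negl:
  assumes "AE t in lebesgue_on {a..b::real}. P t"
  obtains N where "negligible N" "\<And>t. t \<in> {a..b} - N \<Longrightarrow> P t"
proof -
  obtain N where N: "\<And>x. x \<in> space (lebesgue_on {a..b}) - N \<Longrightarrow> P x" "N \<in> null_sets (lebesgue_on {a..b})"
    using AE_E3[OF assms] by blast
  have "N \<in> null_sets lebesgue" using N(2) by (simp add: null_sets_restrict_space)
  then have "negligible N" by (simp add: negligible_iff_null_sets)
  then show ?thesis using N(1) that by auto
qed

lemma integral_ge_AE:
  fixes f h :: "real \<Rightarrow> real"
  assumes "f integrable_on {a..b}" "h integrable_on {a..b}" "AE t in lebesgue_on {a..b}. h t \<le> f t"
  shows "integral {a..b} h \<le> integral {a..b} f"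
proof -
  obtain N where N: "negligible N" "\<And>t. t \<in> {a..b} - N \<Longrightarrow> h t \<le> f t"
    using AE_negl[OF assms(3)] by blast
  have e: "\<And>t. t \<in> {a..b} - N \<Longrightarrow> max (f t) (h t) = f t" using N(2) by auto
  have i: "(\<lambda>t. max (f t) (h t)) integrable_on {a..b}"
    by (rule integrable_spike[OF assms(1) N(1) e])
  have "integral {a..b} f = integral {a..b} (\<lambda>t. max (f t) (h t))"
    by (rule integral_spike[OF N(1) e])
  moreover have "integral {a..b} h \<le> integral {a..b} (\<lambda>t. max (f t) (h t))"
    by (rule integral_le[OF assms(2) i]) auto
  ultimately show ?thesis by simp
qed

lemma orth_nonneg:
  fixes g :: "real^'n \<Rightarrow> real^'n \<Rightarrow> real"
  assumes bil: "bilinear g" and sym: "\<And>v w. g v w = g w v"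
    and idx: "form_index g UNIV = 1" and Y: "g Y Y < 0" and w: "g w Y = 0"
  shows "g w w \<ge> 0"
proof (rule ccontr)
  assume "\<not> g w w \<ge> 0"
  then have ww: "g w w < 0" by simp
  have w0: "w \<noteq> 0" using ww bil by (auto simp: bilinear_lzero)
  let ?v = "\<lambda>i::nat. if i = 0 then Y else w"
  have sum2: "\<And>c. (\<Sum>i<2. c i *\<^sub>R ?v i) = c 0 *\<^sub>R Y + c 1 *\<^sub>R w"
    by (simp add: numeral_2_eq_2)
  have gq: "\<And>c. g (c 0 *\<^sub>R Y + c 1 *\<^sub>R w) (c 0 *\<^sub>R Y + c 1 *\<^sub>R w) = (c 0)^2 * g Y Y + (c 1)^2 * g w w"
    using w sym[of Y w]
    by (simp add: bilinear_ladd[OF bil] bilinear_radd[OF bil] bilinear_lmul[OF bil] bilinear_rmul[OF bil] power2_eq_square)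
  have "2 \<in> negdef_dims g UNIV"
    unfolding negdef_dims_def
  proof (intro CollectI exI[of _ ?v] conjI allI impI)
    show "\<And>i. i < 2 \<Longrightarrow> ?v i \<in> UNIV" by simp
  next
    fix c :: "nat \<Rightarrow> real" and j :: nat assume h: "(\<Sum>i<2. c i *\<^sub>R ?v i) = 0" and j: "j < 2"
    then have z: "c 0 *\<^sub>R Y + c 1 *\<^sub>R w = 0" by (simp add: sum2)
    then have "g (c 0 *\<^sub>R Y + c 1 *\<^sub>R w) Y = 0" using bil by (simp add: bilinear_lzero)
    then have "c 0 * g Y Y = 0" using w
      by (simp add: bilinear_ladd[OF bil] bilinear_lmul[OF bil])
    then have c0: "c 0 = 0" using Y by simp
    then have "c 1 = 0" using z w0 by simp
    then show "c j = 0" using c0 j by (metis One_nat_def less_2_cases)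
  next
    fix c :: "nat \<Rightarrow> real" assume h: "(\<Sum>i<2. c i *\<^sub>R ?v i) \<noteq> 0"
    then have "c 0 \<noteq> 0 \<or> c 1 \<noteq> 0" by (auto simp: sum2)
    then have "(c 0)^2 * g Y Y + (c 1)^2 * g w w < 0"
      using Y ww
      by (smt (verit) mult_nonneg_nonpos mult_pos_neg zero_less_power2 zero_le_power2)
    then show "g (\<Sum>i<2. c i *\<^sub>R ?v i) (\<Sum>i<2. c i *\<^sub>R ?v i) < 0" using gq[of c] by (simp add: sum2)
  qed
  then have "enat 2 \<le> form_index g UNIV" unfolding form_index_def by (intro Sup_upper) auto
  then show False using idx by (simp add: one_enat_def)
qed




lemma quad_zero: fixes b c :: real assumes "\<And>t. 0 \<le> 2*t*b + t^2*c" shows "b = 0"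
proof -
  define d where "d = \<bar>c\<bar>+1"
  have d: "d > 0" "c \<le> d" unfolding d_def by auto
  have "0 \<le> 2*(-b/d)*b + (-b/d)^2*c" by (rule assms)
  also have "(-b/d)^2*c \<le> (-b/d)^2*d" using d by (simp add: mult_left_mono)
  also have "(-b/d)^2*d = b^2/d" using d by (simp add: power2_eq_square field_simps)
  also have "2*(-b/d)*b = -2*(b^2/d)" by (simp add: power2_eq_square field_simps)
  finally have "0 \<le> - (b^2/d)" by simp
  then have "b^2/d \<le> 0" by simp
  then have "b^2 \<le> 0" using d by (simp add: divide_le_0_iff)
  then show ?thesis by simp
qed

lemma coercive:
  fixes g :: "real^'n \<Rightarrow> real^'n \<Rightarrow> real"
  assumes bil: "bilinear g" and sym: "\<And>v w. g v w = g w v"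
    and nd: "\<And>v. (\<forall>w. g v w = 0) \<Longrightarrow> v = 0"
    and orth: "\<And>w. g w Y = 0 \<Longrightarrow> g w w \<ge> 0" and Y: "g Y Y < 0"
  shows "\<exists>a>0. \<forall>u. a * (norm u)^2 \<le> g u u + (-2 / g Y Y) * (g u Y)^2"
proof -
  define K where "K = -2 / g Y Y"
  define Q where "Q u = g u u + K * (g u Y)^2" for u
  note simps = bilinear_ladd[OF bil] bilinear_radd[OF bil] bilinear_lmul[OF bil] bilinear_rmul[OF bil]
     bilinear_lsub[OF bil] bilinear_rsub[OF bil]
  have wdef: "g (u - (g u Y / g Y Y) *\<^sub>R Y) Y = 0" for u
    using Y by (simp add: simps)
  have gww: "g (u - (g u Y / g Y Y) *\<^sub>R Y) (u - (g u Y / g Y Y) *\<^sub>R Y) = g u u - (g u Y)^2 / g Y Y" for u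
    using Y sym[of Y u] by (simp add: simps field_simps power2_eq_square)
  have Qeq: "Q u = g (u - (g u Y / g Y Y) *\<^sub>R Y) (u - (g u Y / g Y Y) *\<^sub>R Y) - (g u Y)^2 / g Y Y" for u
    unfolding Q_def K_def gww by (simp add: field_simps)
  have nn2: "0 \<le> - ((g u Y)^2 / g Y Y)" for u
    using Y by (simp add: divide_nonneg_neg)
  have Qnn: "Q u \<ge> 0" for u
    using Qeq[of u] orth[OF wdef[of u]] nn2[of u] by linarith
  have Qpos: "Q u > 0" if "u \<noteq> 0" for u
  proof (rule ccontr)
    assume "\<not> Q u > 0"
    then have Q0: "Q u = 0" using Qnn[of u] by simp
    have "- ((g u Y)^2 / g Y Y) = 0"
      using Qeq[of u] orth[OF wdef[of u]] nn2[of u] Q0 by linarith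
    then have uY: "g u Y = 0" using Y by simp
    then have uu: "g u u = 0" using Q0 by (simp add: Q_def)
    have "g u z = 0" for z
    proof -
      define z' where "z' = z - (g z Y / g Y Y) *\<^sub>R Y"
      have z'Y: "g z' Y = 0" unfolding z'_def by (rule wdef)
      have eq: "g u z = g u z'" unfolding z'_def using uY by (simp add: simps)
      have "0 \<le> 2*t*(g u z') + t^2 * g z' z'" for t
      proof -
        have "g (u + t *\<^sub>R z') Y = 0" using uY z'Y by (simp add: simps)
        then have "0 \<le> g (u + t *\<^sub>R z') (u + t *\<^sub>R z')" by (rule orth)
        also have "\<dots> = 2*t*(g u z') + t^2 * g z' z'"
          using uu sym[of z' u] by (simp add: simps power2_eq_square algebra_simps)
        finally show ?thesis .
      qed
      then have "g u z' = 0" by (rule quad_zero)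
      then show ?thesis using eq by simp
    qed
    then have "u = 0" using nd by blast
    then show False using that by simp
  qed
  have Qscale: "Q (r *\<^sub>R v) = r^2 * Q v" for r v
    unfolding Q_def by (simp add: simps power2_eq_square algebra_simps)
  have cont: "continuous_on UNIV Q"
    unfolding Q_def
    by (intro continuous_intros bilinear_continuous_on_compose[OF _ _ bil] continuous_on_id continuous_on_const)
  obtain x0 where x0: "x0 \<in> sphere (0::real^'n) 1" "\<And>y. y \<in> sphere 0 1 \<Longrightarrow> Q x0 \<le> Q y"
    using continuous_attains_inf[of "sphere (0::real^'n) 1" Q] cont
    by (metis compact_sphere continuous_on_subset sphere_eq_empty subset_UNIV zero_le_one not_le)
  have a: "Q x0 > 0" using x0(1) by (intro Qpos) auto
  have "Q x0 * (norm u)^2 \<le> Q u" for u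
  proof (cases "u = 0")
    case True then show ?thesis by (simp add: Q_def simps bilinear_lzero[OF bil])
  next
    case False
    have "u = norm u *\<^sub>R (u /\<^sub>R norm u)" using False by simp
    then have "Q u = (norm u)^2 * Q (u /\<^sub>R norm u)" by (metis Qscale)
    moreover have "Q x0 \<le> Q (u /\<^sub>R norm u)" using False by (intro x0(2)) simp
    ultimately show ?thesis by (metis mult.commute mult_right_mono zero_le_power2)
  qed
  then show ?thesis using a unfolding Q_def K_def by blast
qed




lemma H1_deriv_ok: assumes "V \<in> H1" shows "is_H1_deriv V (H1_deriv V)"
proof -
  from assms obtain W where "is_H1_deriv V W" by (auto simp: H1_def)
  then show ?thesis unfolding H1_deriv_def by (rule someI[where P="is_H1_deriv V"])
qed

lemma int_cmult: fixes f :: "real \<Rightarrow> real" shows "f integrable_on S \<Longrightarrow> (\<lambda>x. c * f x) integrable_on S"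
  using integrable_cmul[of f S c] by simp

lemma L1_bound:
  fixes f :: "real \<Rightarrow> real"
  assumes f: "f integrable_on {0..1}" and f2: "(\<lambda>t. (f t)^2) integrable_on {0..1}"
    and fn: "\<And>t. f t \<ge> 0"
  shows "(integral {0..1} f)^2 \<le> integral {0..1} (\<lambda>t. (f t)^2)"
proof -
  define N where "N = integral {0..1} f"
  define A where "A = integral {0..1} (\<lambda>t. (f t)^2)"
  have N0: "N \<ge> 0" unfolding N_def using f fn by (intro integral_nonneg) auto
  have A0: "A \<ge> 0" unfolding A_def using f2 by (intro integral_nonneg) auto
  have key: "N \<le> d/2 + A/(2*d)" if d: "d > 0" for d
  proof -
    have pt: "f t \<le> d/2 + (1/(2*d)) * (f t)^2" for t
    proof -
      have "0 \<le> (f t - d)^2" by simp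
      then have "2*d*f t \<le> d^2 + (f t)^2" by (simp add: power2_eq_square algebra_simps)
      then have "f t \<le> (d^2 + (f t)^2)/(2*d)" using d by (simp add: field_simps)
      also have "\<dots> = d/2 + (1/(2*d)) * (f t)^2" using d by (simp add: field_simps power2_eq_square)
      finally show ?thesis .
    qed
    have i2: "(\<lambda>t. d/2 + (1/(2*d)) * (f t)^2) integrable_on {0..1}"
      by (intro integrable_add integrable_const_ivl int_cmult f2) 
    have "N \<le> integral {0..1} (\<lambda>t. d/2 + (1/(2*d)) * (f t)^2)"
      unfolding N_def by (rule integral_le[OF f i2]) (rule pt)
    also have "\<dots> = d/2 + (1/(2*d)) * A"
      unfolding A_def by (subst integral_add) (use int_cmult[OF f2, of "1/(2*d)"] in \<open>auto simp: integral_mult_right\<close>)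
    finally show ?thesis by simp
  qed
  show ?thesis
  proof (cases "N = 0")
    case True then show ?thesis using A0 by (simp add: N_def A_def)
  next
    case False
    then have Np: "N > 0" using N0 by simp
    have "N \<le> N/2 + A/(2*N)" by (rule key[OF Np])
    then have "N * N \<le> (N/2 + A/(2*N)) * N" using Np by (simp add: mult_right_mono)
    also have "\<dots> = N*N/2 + A/2" using Np by (simp add: field_simps)
    finally show ?thesis by (simp add: N_def A_def power2_eq_square)
  qed
qed

lemma H1P_facts:
  assumes V: "V \<in> H1_P P"
  shows "is_H1_deriv V (H1_deriv V)"
proof -
  have "V \<in> H1" using V by (simp add: H1_P_def)
  then show ?thesis by (rule H1_deriv_ok)
qed

lemma H1P_facts2:
  assumes H: "is_H1_deriv V V'"
  shows "V' \<in> borel_measurable (lebesgue_on {0..1})" "(\<lambda>t. (norm (V' t))^2) integrable_on {0..1}"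
    "\<And>t. t \<in> {0..1} \<Longrightarrow> V t = V 0 + integral {0..t} V'"
  using H unfolding is_H1_deriv_def by blast+

lemma H1P_facts3:
  assumes V: "V \<in> H1_P P" and H: "is_H1_deriv V V'"
  shows "V' integrable_on {0..1}"
    "\<And>t. t \<in> {0..1} \<Longrightarrow> (norm (V t))^2 \<le> integral {0..1} (\<lambda>t. (norm (V' t))^2)"
    "continuous_on {0..1} V"
proof -
  note m = H1P_facts2(1)[OF H] and sq = H1P_facts2(2)[OF H] and eq = H1P_facts2(3)[OF H]
  have bnd: "(\<lambda>t. 1 + (norm (V' t))^2) integrable_on {0..1}"
    by (intro integrable_add integrable_const_ivl sq)
  have nb: "norm (V' t) \<le> 1 + (norm (V' t))^2" for t
  proof -
    have "0 \<le> (norm (V' t) - 1/2)^2" by (rule zero_le_power2)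
    then show ?thesis by (simp add: power2_eq_square algebra_simps)
  qed
  show i: "V' integrable_on {0..1}"
    by (rule measurable_bounded_by_integrable_imp_integrable[OF m bnd]) (simp_all add: nb)
  have mn: "(\<lambda>t. norm (V' t)) \<in> borel_measurable (lebesgue_on {0..1})" using borel_measurable_continuous_on[OF continuous_on_norm_id m] .
  have ni: "(\<lambda>t. norm (V' t)) integrable_on {0..1}"
    by (rule measurable_bounded_by_integrable_imp_integrable_real[OF mn bnd]) (simp_all add: nb)
  have L: "(integral {0..1} (\<lambda>t. norm (V' t)))^2 \<le> integral {0..1} (\<lambda>t. (norm (V' t))^2)"
    by (rule L1_bound[OF ni]) (rule sq, simp)
  show "(norm (V t))^2 \<le> integral {0..1} (\<lambda>t. (norm (V' t))^2)" if t: "t \<in> {0..1}" for t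
  proof -
    have V1: "V 1 = 0" using V unfolding H1_P_def by blast
    have e1: "V 1 = V 0 + integral {0..1} V'" by (rule eq) simp
    have c: "integral {0..t} V' + integral {t..1} V' = integral {0..1} V'"
      using t by (intro Henstock_Kurzweil_Integration.integral_combine[OF _ _ i]) auto
    have "V t = V 0 + integral {0..t} V'" using eq[OF t] .
    moreover have "V 0 = - integral {0..1} V'" using e1 V1 by (simp add: eq_neg_iff_add_eq_0)
    moreover have "integral {0..t} V' = integral {0..1} V' - integral {t..1} V'" using c by (simp add: algebra_simps)
    ultimately have "V t = - integral {t..1} V'" by simp
    then have "norm (V t) = norm (integral {t..1} V')" by simp
    also have "\<dots> \<le> integral {t..1} (\<lambda>s. norm (V' s))"
      using t by (intro integral_norm_bound_integral integrable_on_subinterval[OF i] integrable_on_subinterval[OF ni]) auto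
    also have "\<dots> \<le> integral {0..1} (\<lambda>s. norm (V' s))"
      using t by (intro integral_subset_le integrable_on_subinterval[OF ni] ni) auto
    finally have "norm (V t) \<le> integral {0..1} (\<lambda>s. norm (V' s))" .
    then have "(norm (V t))^2 \<le> (integral {0..1} (\<lambda>s. norm (V' s)))^2"
      by (simp add: power_mono)
    then show ?thesis using L by linarith
  qed
  have "continuous_on {0..1} (\<lambda>t. V 0 + integral {0..t} V')"
    by (intro continuous_intros indefinite_integral_continuous_1 i)
  then show "continuous_on {0..1} V"
    by (rule continuous_on_eq) (erule eq[symmetric])
qed




lemma fun_index_zero:
  assumes "\<And>V. V \<in> U \<Longrightarrow> B V V \<ge> 0"
  shows "fun_form_index B U = 0"
proof -
  have "fun_negdef_dims B U \<subseteq> {0}"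
  proof
    fix k assume k: "k \<in> fun_negdef_dims B U"
    show "k \<in> {0}"
    proof (rule ccontr)
      assume "k \<notin> {0}"
      then have kp: "0 < k" by simp
      obtain v where v: "\<forall>i<k. v i \<in> U"
        "\<forall>c. (\<lambda>t. \<Sum>i<k. c i *\<^sub>R v i t) = (\<lambda>t. 0) \<longrightarrow> (\<forall>i<k. c i = 0)"
        "\<forall>c. (\<lambda>t. \<Sum>i<k. c i *\<^sub>R v i t) \<noteq> (\<lambda>t. 0) \<longrightarrow>
              B (\<lambda>t. \<Sum>i<k. c i *\<^sub>R v i t) (\<lambda>t. \<Sum>i<k. c i *\<^sub>R v i t) < 0"
        using k unfolding fun_negdef_dims_def by blast
      define c :: "nat \<Rightarrow> real" where "c i = (if i = 0 then 1 else 0)" for i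
      have s: "(\<lambda>t. \<Sum>i<k. c i *\<^sub>R v i t) = v 0"
      proof
        fix t
        have "(\<Sum>i<k. c i *\<^sub>R v i t) = (\<Sum>i\<in>{..<k}. if i = 0 then v 0 t else 0)"
          by (rule sum.cong) (auto simp: c_def)
        also have "\<dots> = v 0 t" using kp by (simp add: sum.delta)
        finally show "(\<Sum>i<k. c i *\<^sub>R v i t) = v 0 t" .
      qed
      have ne: "(\<lambda>t. \<Sum>i<k. c i *\<^sub>R v i t) \<noteq> (\<lambda>t. 0)"
      proof
        assume "(\<lambda>t. \<Sum>i<k. c i *\<^sub>R v i t) = (\<lambda>t. 0)"
        then have "c 0 = 0" using v(2) kp by blast
        then show False by (simp add: c_def)
      qed
      have "B (\<lambda>t. \<Sum>i<k. c i *\<^sub>R v i t) (\<lambda>t. \<Sum>i<k. c i *\<^sub>R v i t) < 0"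
        using v(3) ne by blast
      then have "B (v 0) (v 0) < 0" by (simp only: s)
      moreover have "B (v 0) (v 0) \<ge> 0" using assms v(1) kp by blast
      ultimately show False by simp
    qed
  qed
  then have "enat ` fun_negdef_dims B U \<subseteq> {0}" by (auto simp: zero_enat_def)
  then have "Sup (enat ` fun_negdef_dims B U) \<le> 0"
    by (intro Sup_least) auto
  then show ?thesis unfolding fun_form_index_def by simp
qed

lemma ptwise:
  fixes g :: "real^'n \<Rightarrow> real^'n \<Rightarrow> real"
  assumes bil: "bilinear g"
    and coerc: "\<And>u. a * (norm u)^2 \<le> g u u + K * (g u Y0)^2" and K: "K \<ge> 0"
    and Gb: "\<And>x y. \<bar>g x y\<bar> \<le> G * norm x * norm y" and G: "G \<ge> 0"
    and c: "g u Ys = \<sigma> * g w Yd" and Ys: "norm (Ys - Y0) \<le> \<eta>" and Yd: "norm Yd \<le> L"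
    and eta: "2*K*G^2*\<eta>^2 \<le> a/2" and sig: "\<sigma> \<ge> 0"
  shows "(a/2) * (norm u)^2 - 2*K*G^2*L^2*\<sigma>^2*(norm w)^2 \<le> g u u"
proof -
  define p where "p = \<sigma> * G * norm w * L"
  define q where "q = G * norm u * \<eta>"
  have L0: "L \<ge> 0" using Yd norm_ge_zero order_trans by blast
  have e0: "\<eta> \<ge> 0" using Ys norm_ge_zero order_trans by blast
  have "g u Y0 = g u Ys - g u (Ys - Y0)" by (simp add: bilinear_rsub[OF bil])
  then have t1: "\<bar>g u Y0\<bar> \<le> \<bar>g u Ys\<bar> + \<bar>g u (Ys - Y0)\<bar>" by simp
  have t2: "\<bar>g u Ys\<bar> \<le> p"
  proof -
    have "\<bar>g u Ys\<bar> = \<sigma> * \<bar>g w Yd\<bar>" using c sig by (simp add: abs_mult)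
    also have "\<dots> \<le> \<sigma> * (G * norm w * norm Yd)" using Gb sig by (simp add: mult_left_mono)
    also have "\<dots> \<le> \<sigma> * (G * norm w * L)" using Yd sig G by (simp add: mult_left_mono)
    finally show ?thesis by (simp add: p_def mult.assoc)
  qed
  have t3: "\<bar>g u (Ys - Y0)\<bar> \<le> q"
  proof -
    have "\<bar>g u (Ys - Y0)\<bar> \<le> G * norm u * norm (Ys - Y0)" by (rule Gb)
    also have "\<dots> \<le> G * norm u * \<eta>" using Ys G by (simp add: mult_left_mono)
    finally show ?thesis by (simp add: q_def)
  qed
  have gY: "\<bar>g u Y0\<bar> \<le> p + q" using t1 t2 t3 by linarith
  have p0: "p \<ge> 0" "q \<ge> 0" using sig G L0 e0 by (auto simp: p_def q_def)
  have "(g u Y0)^2 \<le> (p + q)^2"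
    using gY p0 by (metis abs_ge_zero power2_abs power_mono)
  also have "\<dots> \<le> 2*p^2 + 2*q^2"
  proof -
    have "0 \<le> (p - q)^2" by simp
    then show ?thesis by (simp add: power2_eq_square algebra_simps)
  qed
  finally have sq: "(g u Y0)^2 \<le> 2*p^2 + 2*q^2" .
  have "K * (g u Y0)^2 \<le> K * (2*p^2 + 2*q^2)" using sq K by (simp add: mult_left_mono)
  also have "K * (2*p^2 + 2*q^2) = 2*K*G^2*L^2*\<sigma>^2*(norm w)^2 + (2*K*G^2*\<eta>^2) * (norm u)^2"
    by (simp add: p_def q_def power_mult_distrib algebra_simps)
  also have "(2*K*G^2*\<eta>^2) * (norm u)^2 \<le> (a/2) * (norm u)^2"
    using eta by (rule mult_right_mono) simp
  finally have "K * (g u Y0)^2 \<le> 2*K*G^2*L^2*\<sigma>^2*(norm w)^2 + (a/2) * (norm u)^2" by simp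
  then show ?thesis using coerc[of u] by simp
qed




lemma mv_bilinear: "bilinear (\<lambda>(A::real^'n^'m) (x::real^'n). A *v x)"
  unfolding bilinear_def
  by (auto intro!: linearI simp: algebra_simps scaleR_matrix_vector_assoc)

lemma mv_norm:
  fixes A :: "real^'n^'m"
  shows "norm (A *v x) \<le> real CARD('m) * real CARD('n) * norm A * norm x"
proof -
  have "norm (A *v x) \<le> onorm ((*v) A) * norm x" by (rule onorm) simp
  also have "onorm ((*v) A) \<le> real CARD('m) * real CARD('n) * norm A"
  proof (rule onorm_le_matrix_component)
    fix i j
    have "\<bar>A $ i $ j\<bar> \<le> norm (A $ i)" by (rule component_le_norm_cart)
    also have "\<dots> \<le> norm A" by (rule Finite_Cartesian_Product.norm_nth_le)
    finally show "\<bar>A $ i $ j\<bar> \<le> norm A" .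
  qed
  finally show ?thesis by (simp add: mult_right_mono)
qed


theorem mainTheorem12:
  fixes g :: "real^'n \<Rightarrow> real^'n \<Rightarrow> real"
    and R :: "real \<Rightarrow> real^'n^'n"
    and Y Y' :: "real \<Rightarrow> real^'n"
    and P :: "(real^'n) set"
    and S :: "real^'n \<Rightarrow> real^'n"
  assumes g_bil: "bilinear g"
    and g_sym: "\<And>v w. g v w = g w v"
    and g_nondeg: "\<And>v. (\<forall>w. g v w = 0) \<Longrightarrow> v = 0"
    and g_index: "form_index g UNIV = 1"
    and R_cont: "continuous_on {0..1} R"
    and R_sym: "\<And>t v w. t \<in> {0..1} \<Longrightarrow> g (R t *v v) w = g v (R t *v w)"
    and Y_deriv: "\<And>t. t \<in> {0..1} \<Longrightarrow> (Y has_vector_derivative Y' t) (at t within {0..1})"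
    and Y'_deriv: "\<And>t. t \<in> {0..1} \<Longrightarrow> (Y' has_vector_derivative (R t *v Y t)) (at t within {0..1})"
    and Y_timelike: "\<And>t. t \<in> {0..1} \<Longrightarrow> g (Y t) (Y t) < 0"
    and P_sub: "subspace P"
    and P_nondeg: "\<And>v. v \<in> P \<Longrightarrow> (\<forall>w\<in>P. g v w = 0) \<Longrightarrow> v = 0"
    and S_lin: "linear S"
    and S_P: "S ` P \<subseteq> P"
    and S_sym: "\<And>v w. v \<in> P \<Longrightarrow> w \<in> P \<Longrightarrow> g (S v) w = g v (S w)"
  shows "((\<forall>v\<in>P. g (Y 0) v = 0) \<longrightarrow>
            (\<exists>\<epsilon>>0. \<epsilon> \<le> 1 \<and> (\<forall>\<sigma>\<in>{0<..\<epsilon>}.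
               fun_form_index (I_hat g R S \<sigma>) (HP_sigma g Y Y' P \<sigma>) = 0)))
       \<and> (\<not> (\<forall>v\<in>P. g (Y 0) v = 0) \<longrightarrow>
            fun_form_index (C0 g) (HP_sigma g Y Y' P 0) = 0)"
proof -
  have Y0: "g (Y 0) (Y 0) < 0" using Y_timelike by simp
  have orth: "\<And>w. g w (Y 0) = 0 \<Longrightarrow> g w w \<ge> 0"
    by (rule orth_nonneg[OF g_bil g_sym g_index Y0])
  obtain G where G: "G > 0" "\<And>x y. norm (g x y) \<le> G * norm x * norm y"
    using bilinear_bounded_pos[OF g_bil] by blast
  have Gb: "\<And>x y. \<bar>g x y\<bar> \<le> G * norm x * norm y" using G(2) by simp
  have gcont: "continuous_on UNIV (\<lambda>u. g u u)"
    by (intro bilinear_continuous_on_compose[OF _ _ g_bil] continuous_on_id)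
  have Fint: "(\<lambda>t. g (H1_deriv V t) (H1_deriv V t)) integrable_on {0..1}"
    if "is_H1_deriv V (H1_deriv V)" for V :: "real \<Rightarrow> real^'n"
  proof -
    note m = H1P_facts2(1)[OF that] and sq = H1P_facts2(2)[OF that]
    have mF: "(\<lambda>t. g (H1_deriv V t) (H1_deriv V t)) \<in> borel_measurable (lebesgue_on {0..1})"
      using borel_measurable_continuous_on[OF gcont m] .
    show ?thesis
      by (rule measurable_bounded_by_integrable_imp_integrable_real[OF mF int_cmult[OF sq, of G]])
         (use Gb in \<open>simp_all add: power2_eq_square mult.assoc\<close>)
  qed
  have part2: "fun_form_index (C0 g) (HP_sigma g Y Y' P 0) = 0"
  proof (rule fun_index_zero)
    fix V assume V: "V \<in> HP_sigma g Y Y' P 0"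
    then have VH: "V \<in> H1_P P" and cons: "AE t in lebesgue_on {0..1}. g (H1_deriv V t) (Y (0 * t)) - 0 * g (V t) (Y' (0 * t)) = 0"
      unfolding HP_sigma_def by auto
    have H: "is_H1_deriv V (H1_deriv V)" by (rule H1P_facts[OF VH])
    have ae: "AE t in lebesgue_on {0..1}. (\<lambda>_. 0) t \<le> g (H1_deriv V t) (H1_deriv V t)"
      using cons by (rule eventually_mono) (simp add: orth)
    have "0 \<le> integral {0..1} (\<lambda>t. g (H1_deriv V t) (H1_deriv V t))"
      using integral_ge_AE[OF Fint[OF H] integrable_const_ivl ae] by simp
    then show "C0 g V V \<ge> 0" unfolding C0_def .
  qed
  have part1: "\<exists>\<epsilon>>0. \<epsilon> \<le> 1 \<and> (\<forall>\<sigma>\<in>{0<..\<epsilon>}.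
               fun_form_index (I_hat g R S \<sigma>) (HP_sigma g Y Y' P \<sigma>) = 0)"
proof -
    define K where "K = -2 / g (Y 0) (Y 0)"
    have K: "K \<ge> 0" unfolding K_def using Y0 by (simp add: divide_nonneg_neg)
    obtain a where a: "a > 0" "\<And>u. a * (norm u)^2 \<le> g u u + K * (g u (Y 0))^2"
      using coercive[OF g_bil g_sym g_nondeg orth Y0] unfolding K_def by blast
    have Y'c: "continuous_on {0..1} Y'"
      using Y'_deriv has_vector_derivative_continuous continuous_on_eq_continuous_within by blast
    obtain L where L: "\<And>s. s \<in> {0..1} \<Longrightarrow> norm (Y' s) \<le> L"
      using compact_imp_bounded[OF compact_continuous_image[OF Y'c compact_Icc]]
      unfolding bounded_iff by blast
    have L0: "L \<ge> 0"
    proof -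
      have "norm (Y' 0) \<le> L" by (rule L) simp
      then show ?thesis using norm_ge_zero order_trans by blast
    qed
    obtain Bm where Bm: "\<And>s. s \<in> {0..1} \<Longrightarrow> norm (R s) \<le> Bm"
      using compact_imp_bounded[OF compact_continuous_image[OF R_cont compact_Icc]]
      unfolding bounded_iff by blast
    have Bm0: "Bm \<ge> 0"
    proof -
      have "norm (R 0) \<le> Bm" by (rule Bm) simp
      then show ?thesis using norm_ge_zero order_trans by blast
    qed
    define Rb where "Rb = real CARD('n) * real CARD('n) * Bm"
    have Rb0: "Rb \<ge> 0" unfolding Rb_def using Bm0 by simp
    have Rb: "norm (R s *v v) \<le> Rb * norm v" if "s \<in> {0..1}" for s v
    proof -
      have "norm (R s *v v) \<le> real CARD('n) * real CARD('n) * norm (R s) * norm v" by (rule mv_norm)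
      also have "\<dots> \<le> Rb * norm v" unfolding Rb_def using Bm[OF that]
        by (intro mult_right_mono mult_left_mono) auto
      finally show ?thesis .
    qed
    obtain Sb where Sb: "Sb > 0" "\<And>x. norm (S x) \<le> norm x * Sb"
      using bounded_linear.pos_bounded[of S] S_lin linear_conv_bounded_linear by blast
    define \<eta> where "\<eta> = min 1 (a / (4*K*G^2 + 1))"
    have eta0: "\<eta> > 0" unfolding \<eta>_def using a K by (simp add: add_nonneg_pos)
    have eta: "2*K*G^2*\<eta>^2 \<le> a/2"
    proof -
      have e1: "\<eta> \<le> 1" unfolding \<eta>_def by simp
      have "\<eta>^2 \<le> \<eta>" using eta0 e1 by (simp add: power2_eq_square mult_left_le_one_le)
      then have "2*K*G^2*\<eta>^2 \<le> 2*K*G^2*\<eta>" using K by (simp add: mult_left_mono)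
      also have "\<dots> \<le> 2*K*G^2*(a / (4*K*G^2 + 1))" using K unfolding \<eta>_def by (intro mult_left_mono) auto
      also have "\<dots> \<le> a/2"
      proof -
        have p: "4*K*G^2 + 1 > 0" using K by (simp add: add_nonneg_pos)
        have "2*K*G^2*a * 2 \<le> a * (4*K*G^2 + 1)" using a by (simp add: algebra_simps)
        then show ?thesis using p by (simp add: field_simps)
      qed
      finally show ?thesis .
    qed
    have "continuous (at 0 within {0..1}) Y"
      using Y_deriv[of 0] has_vector_derivative_continuous by auto
    then obtain \<delta> where \<delta>: "\<delta> > 0" "\<And>s. s \<in> {0..1} \<Longrightarrow> dist s 0 < \<delta> \<Longrightarrow> dist (Y s) (Y 0) < \<eta>"
      using eta0 unfolding continuous_within_eps_delta by blast
    define c where "c = 2*K*G^2*L^2"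
    have c0: "c \<ge> 0" unfolding c_def using K by simp
    define M where "M = c + G*Rb + G*Sb"
    have M0: "M \<ge> 0" unfolding M_def using c0 G Rb0 Sb by simp
    define \<epsilon> where "\<epsilon> = min (\<delta>/2) (min 1 (a / (2*M + 1)))"
    have eps0: "\<epsilon> > 0" unfolding \<epsilon>_def using \<delta> a M0 by (simp add: add_nonneg_pos)
    have eps1: "\<epsilon> \<le> 1" unfolding \<epsilon>_def by simp
    have epsM: "\<epsilon> * M \<le> a/2"
    proof -
      have "\<epsilon> * M \<le> (a / (2*M + 1)) * M" unfolding \<epsilon>_def using M0 by (intro mult_right_mono) auto
      also have "\<dots> \<le> a/2"
      proof -
        have "a * M * 2 \<le> a * (2*M+1)" using a by (simp add: algebra_simps)
        then show ?thesis using M0 by (simp add: field_simps)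
      qed
      finally show ?thesis .
    qed
    have main: "I_hat g R S \<sigma> V V \<ge> 0" if sig: "\<sigma> \<in> {0<..\<epsilon>}" and V: "V \<in> HP_sigma g Y Y' P \<sigma>" for \<sigma> V
    proof -
      have s0: "\<sigma> > 0" and s1: "\<sigma> \<le> \<epsilon>" using sig by auto
      have VH: "V \<in> H1_P P" and cons: "AE t in lebesgue_on {0..1}. g (H1_deriv V t) (Y (\<sigma> * t)) - \<sigma> * g (V t) (Y' (\<sigma> * t)) = 0"
        using V unfolding HP_sigma_def by auto
      define V' where "V' = H1_deriv V"
      have H: "is_H1_deriv V V'" unfolding V'_def by (rule H1P_facts[OF VH])
      note sq = H1P_facts2(2)[OF H] and bnd = H1P_facts3(2)[OF VH H] and Vc = H1P_facts3(3)[OF VH H]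
      define A where "A = integral {0..1} (\<lambda>t. (norm (V' t))^2)"
      have A0: "A \<ge> 0"
      proof -
        have "(norm (V 0))^2 \<le> A" unfolding A_def by (rule bnd) simp
        then show ?thesis using zero_le_power2 order_trans by blast
      qed
      have bA: "(norm (V t))^2 \<le> A" if "t \<in> {0..1}" for t using bnd[OF that] unfolding A_def .
      define F where "F t = g (V' t) (V' t)" for t
      have Fi: "F integrable_on {0..1}" unfolding F_def V'_def by (rule Fint) (use H V'_def in simp)
      define h where "h t = (a/2) * (norm (V' t))^2 - c*\<sigma>^2*A" for t
      have hi: "h integrable_on {0..1}" unfolding h_def
        by (intro integrable_diff int_cmult sq integrable_const_ivl)
      have ae: "AE t in lebesgue_on {0..1}. h t \<le> F t"
        using cons
      proof (rule AE_mp)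
        show "AE t in lebesgue_on {0..1}. g (H1_deriv V t) (Y (\<sigma> * t)) - \<sigma> * g (V t) (Y' (\<sigma> * t)) = 0 \<longrightarrow> h t \<le> F t"
        proof (rule AE_I2, intro impI)
          fix t assume t: "t \<in> space (lebesgue_on {0..1})"
            and ct: "g (H1_deriv V t) (Y (\<sigma> * t)) - \<sigma> * g (V t) (Y' (\<sigma> * t)) = 0"
          have t01: "t \<in> {0..1}" using t by simp
          have stl: "\<sigma> * t \<le> \<sigma>" "0 \<le> \<sigma> * t" using t01 s0 by (auto intro: mult_right_le_one_le)
          have st: "\<sigma> * t \<in> {0..1}" using stl s1 eps1 by auto
          have "\<sigma> * t \<le> \<epsilon>" using stl s1 by linarith
          then have "\<sigma> * t < \<delta>" using \<delta>(1) unfolding \<epsilon>_def by linarith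
          then have "dist (Y (\<sigma> * t)) (Y 0) < \<eta>" using st \<delta>(2)[of "\<sigma> * t"] by (simp add: dist_real_def)
          then have Ys: "norm (Y (\<sigma> * t) - Y 0) \<le> \<eta>" by (simp add: dist_norm)
          have c': "g (V' t) (Y (\<sigma> * t)) = \<sigma> * g (V t) (Y' (\<sigma> * t))" using ct unfolding V'_def by simp
          have "(a/2) * (norm (V' t))^2 - 2*K*G^2*L^2*\<sigma>^2*(norm (V t))^2 \<le> g (V' t) (V' t)"
            by (rule ptwise[OF g_bil a(2) K Gb less_imp_le[OF G(1)] c' Ys L[OF st] eta less_imp_le[OF s0]])
          moreover have "c*\<sigma>^2*(norm (V t))^2 \<le> c*\<sigma>^2*A"
            using bA[OF t01] c0 by (simp add: mult_left_mono)
          ultimately show "h t \<le> F t" unfolding h_def F_def c_def by linarith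
        qed
      qed
      have IF: "integral {0..1} F \<ge> (a/2)*A - c*\<sigma>^2*A"
      proof -
        have "integral {0..1} h = (a/2)*A - c*\<sigma>^2*A" unfolding h_def A_def
          by (subst integral_diff) (auto intro!: int_cmult sq simp: integral_mult_right)
        then show ?thesis using integral_ge_AE[OF Fi hi ae] by simp
      qed
      define Gt where "Gt t = g (R (\<sigma> * t) *v V t) (V t)" for t
      have Gtc: "continuous_on {0..1} Gt"
      proof -
        have Rc: "continuous_on {0..1} (\<lambda>t. R (\<sigma> * t))"
          by (rule continuous_on_compose2[OF R_cont]) (use s0 s1 eps1 in \<open>auto intro!: continuous_intros mult_right_le_one_le order_trans[of _ \<sigma>]\<close>)
        have "continuous_on {0..1} (\<lambda>t. R (\<sigma> * t) *v V t)"
          using bilinear_continuous_on_compose[OF Rc Vc mv_bilinear] by simp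
        then show ?thesis unfolding Gt_def by (rule bilinear_continuous_on_compose[OF _ Vc g_bil])
      qed
      have Gti: "Gt integrable_on {0..1}" by (rule integrable_continuous_interval[OF Gtc])
      have IG: "integral {0..1} Gt \<ge> - (G*Rb*A)"
      proof -
        have "integral {0..1} (\<lambda>t::real. - (G*Rb*A)) \<le> integral {0..1} Gt"
        proof (rule integral_le)
          show "(\<lambda>t::real. - (G*Rb*A)) integrable_on {0..1}" by (rule integrable_const_ivl)
          show "Gt integrable_on {0..1}" by (rule Gti)
        next
          fix t :: real assume t: "t \<in> {0..1}"
          have stl: "\<sigma> * t \<le> \<sigma>" "0 \<le> \<sigma> * t" using t s0 by (auto intro: mult_right_le_one_le)
          have st: "\<sigma> * t \<in> {0..1}" using stl s1 eps1 by auto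
          have "\<bar>Gt t\<bar> \<le> G * norm (R (\<sigma> * t) *v V t) * norm (V t)" unfolding Gt_def by (rule Gb)
          also have "\<dots> \<le> G * (Rb * norm (V t)) * norm (V t)"
            using Rb[OF st, of "V t"] G(1) by (intro mult_right_mono mult_left_mono) auto
          also have "\<dots> = G * Rb * (norm (V t))^2" by (simp add: power2_eq_square)
          also have "\<dots> \<le> G * Rb * A" using bA[OF t] G(1) Rb0 by (intro mult_left_mono) auto
          finally show "- (G*Rb*A) \<le> Gt t" by linarith
        qed
        then show ?thesis by simp
      qed
      have IS: "g (S (V 0)) (V 0) \<le> G*Sb*A"
      proof -
        have "g (S (V 0)) (V 0) \<le> G * norm (S (V 0)) * norm (V 0)" using Gb[of "S (V 0)" "V 0"] by linarith
        also have "\<dots> \<le> G * (norm (V 0) * Sb) * norm (V 0)"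
          using Sb(2)[of "V 0"] G(1) by (intro mult_right_mono mult_left_mono) auto
        also have "\<dots> = G * Sb * (norm (V 0))^2" by (simp add: power2_eq_square)
        also have "\<dots> \<le> G * Sb * A" using bA[of 0] G(1) Sb(1) by (intro mult_left_mono) auto
        finally show ?thesis .
      qed
      have Ieq: "I_hat g R S \<sigma> V V = (1/\<sigma>) * integral {0..1} F + \<sigma> * integral {0..1} Gt - g (S (V 0)) (V 0)"
        unfolding I_hat_def V'_def[symmetric] F_def[symmetric] Gt_def[symmetric]
        by (subst integral_add[OF int_cmult[OF Fi] int_cmult[OF Gti]]) (simp only: integral_mult_right)
      have sM: "\<sigma> * M \<le> a/2" using epsM s1 M0 by (meson mult_right_mono order_trans)
      have "\<sigma> * ((1/\<sigma>) * integral {0..1} F + \<sigma> * integral {0..1} Gt - g (S (V 0)) (V 0))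
            = integral {0..1} F + \<sigma>^2 * integral {0..1} Gt - \<sigma> * g (S (V 0)) (V 0)"
        using s0 by (simp add: field_simps power2_eq_square)
      also have "\<dots> \<ge> ((a/2)*A - c*\<sigma>^2*A) + \<sigma>^2 * (- (G*Rb*A)) - \<sigma> * (G*Sb*A)"
      proof -
        have "\<sigma>^2 * (- (G*Rb*A)) \<le> \<sigma>^2 * integral {0..1} Gt" by (rule mult_left_mono[OF IG]) simp
        moreover have "\<sigma> * g (S (V 0)) (V 0) \<le> \<sigma> * (G*Sb*A)" by (rule mult_left_mono[OF IS]) (use s0 in simp)
        ultimately show ?thesis using IF by linarith
      qed
      finally have fin: "\<sigma> * I_hat g R S \<sigma> V V \<ge> ((a/2)*A - c*\<sigma>^2*A) + \<sigma>^2 * (- (G*Rb*A)) - \<sigma> * (G*Sb*A)"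
        using Ieq by simp
      have "((a/2)*A - c*\<sigma>^2*A) + \<sigma>^2 * (- (G*Rb*A)) - \<sigma> * (G*Sb*A) = A * (a/2 - \<sigma> * (\<sigma>*c + \<sigma>*G*Rb + G*Sb))"
        by (simp add: algebra_simps power2_eq_square)
      also have "\<dots> \<ge> 0"
      proof -
        have "\<sigma> * (\<sigma>*c + \<sigma>*G*Rb + G*Sb) \<le> \<sigma> * M"
        proof -
          have "\<sigma> \<le> 1" using s1 eps1 by simp
          then have "\<sigma>*c + \<sigma>*G*Rb + G*Sb \<le> M"
          proof -
            have "\<sigma>*c \<le> c" using \<open>\<sigma> \<le> 1\<close> c0 s0 by (simp add: mult_left_le_one_le)
            moreover have "\<sigma>*(G*Rb) \<le> G*Rb" using \<open>\<sigma> \<le> 1\<close> G(1) Rb0 s0 by (simp add: mult_left_le_one_le)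
            ultimately show ?thesis unfolding M_def by (simp add: mult.assoc)
          qed
          then show ?thesis using s0 by (simp add: mult_left_mono)
        qed
        then show ?thesis using sM A0 by simp
      qed
      finally have "\<sigma> * I_hat g R S \<sigma> V V \<ge> 0" using fin by linarith
      then show ?thesis using s0 by (simp add: zero_le_mult_iff)
    qed
    show ?thesis
      by (rule exI[of _ \<epsilon>]) (use eps0 eps1 main in \<open>auto intro!: fun_index_zero\<close>)
  qed
  show ?thesis using part1 part2 by blast
qed


end
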